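(* Consider the Floer triple $(\mathcal{C},f,m)$ over $\mathbb{Z}$ with $\mathcal{C}=\{\overline{c}_n:n\ge0\}\cup\{\underline{c}_n:n\ge1\}$, $f(\overline{c}_n)=-n$, $f(\underline{c}_n)=-n-1$, and whose only nonzero values of $m$ are $m(\underline{c}_n,\overline{c}_{n-1})=1$ and $m(\underline{c}_n,\overline{c}_n)=-2$ for $n\ge1$. Then, computing with integer coefficients, $\overline{HM}=\varinjlim_{b\to\infty}\varprojlim_{a\to-\infty}HM_a^b=0$, whereas the Novikov homology $HM\neq0$. In particular $HM$ and $\overline{HM}$ are not isomorphic.
   Context: A Floer triple over $\mathbb{Z}$: a set $\mathcal{C}$, $f\colon\mathcal{C}\to\mathbb{R}$, $m\colon\mathcal{C}\times\mathcal{C}\to\mathbb{Z}$ with (i) $\mathcal{C}_a^b=\{c: a\le f(c)\le b\}$ finite for all $a\le b$; (ii) $m(c_1,c_2)\ne0\Rightarrow f(c_1)<f(c_2)$; (iii) $\sum_{c_2}m(c_1,c_2)m(c_2,c_3)=0$ for all $c_1,c_3$. $CM_a^b$ is the free abelian group on $\mathcal{C}_a^b$ (zero if $a>b$), $\partial_a^b c=\sum_{c'\in\mathcal{C}_a^b}m(c',c)c'$, $HM_a^b$ its homology. For $a_1\le a_2$, $p^b_{a_2,a_1}\colon CM^b_{a_1}\to CM^b_{a_2}$ sends $c\mapsto c$ if $f(c)\ge a_2$ and to $0$ otherwise; for $b_1\le b_2$, $i_a^{b_2,b_1}$ is the inclusion; $Hp,Hi$ are the induced maps. $\varprojlim_a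 HM_a^b$ is the group of families $(x_a)_{a}$ with $Hp^b_{a_2,a_1}x_{a_1}=x_{a_2}$; the direct limit over $b$ is taken with respect to the maps induced componentwise by $Hi$. The Novikov complex consists of formal sums $\sum_{c}\gamma_c c$, $\gamma_c\in\mathbb{Z}$, with $\{c:\gamma_c\ne0,f(c)>b\}$ finite for all $b$, and $\partial\sum\gamma_c c=\sum_c\gamma_c\sum_{c'}m(c',c)c'$; $HM$ is its homology. *)

theory Defs
  imports Complex_Main
begin

definition floer_triple :: "'c set \<Rightarrow> ('c \<Rightarrow> real) \<Rightarrow> ('c \<Rightarrow> 'c \<Rightarrow> int) \<Rightarrow> bool" where
  "floer_triple C f m \<longleftrightarrow>
     (\<forall>a b. a \<le> b \<longrightarrow> finite {c\<in>C. a \<le> f c \<and> f c \<le> b}) \<and>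
     (\<forall>c1\<in>C. \<forall>c2\<in>C. m c1 c2 \<noteq> 0 \<longrightarrow> f c1 < f c2) \<and>
     (\<forall>c1\<in>C. \<forall>c3\<in>C.
        (\<Sum>c2\<in>{c\<in>C. m c1 c \<noteq> 0 \<and> m c c3 \<noteq> 0}. m c1 c2 * m c2 c3) = 0)"

definition lev :: "'c set \<Rightarrow> ('c \<Rightarrow> real) \<Rightarrow> real \<Rightarrow> real \<Rightarrow> 'c set" where
  "lev C f a b = {c\<in>C. a \<le> f c \<and> f c \<le> b}"

definition CM :: "'c set \<Rightarrow> ('c \<Rightarrow> real) \<Rightarrow> real \<Rightarrow> real \<Rightarrow> ('c \<Rightarrow> int) set" where
  "CM C f a b = {x. \<forall>c. x c \<noteq> 0 \<longrightarrow> c \<in> lev C f a b}"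

definition bd :: "'c set \<Rightarrow> ('c \<Rightarrow> real) \<Rightarrow> ('c \<Rightarrow> 'c \<Rightarrow> int) \<Rightarrow> real \<Rightarrow> real
    \<Rightarrow> ('c \<Rightarrow> int) \<Rightarrow> ('c \<Rightarrow> int)" where
  "bd C f m a b x = (\<lambda>c'. if c' \<in> lev C f a b then (\<Sum>c\<in>lev C f a b. m c' c * x c) else 0)"

definition cycles where
  "cycles C f m a b = {x \<in> CM C f a b. bd C f m a b x = (\<lambda>_. 0)}"

definition boundaries where
  "boundaries C f m a b = bd C f m a b ` CM C f a b"

definition hcls where
  "hcls C f m a b x = {y \<in> cycles C f m a b. x - y \<in> boundaries C f m a b}"

definition HMab where
  "HMab C f m a b = cycles C f m a b //
     {(x, y). x \<in> cycles C f m a b \<and> y \<in> cycles C f m a b \<and> x - y \<in> boundaries C f m a b}"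

definition proj :: "('c \<Rightarrow> real) \<Rightarrow> real \<Rightarrow> ('c \<Rightarrow> int) \<Rightarrow> ('c \<Rightarrow> int)" where
  "proj f a2 x = (\<lambda>c. if f c \<ge> a2 then x c else 0)"

definition Hp where
  "Hp C f m b a2 a1 X = (\<Union>x\<in>X. hcls C f m a2 b (proj f a2 x))"

definition Hi where
  "Hi C f m a b2 b1 X = (\<Union>x\<in>X. hcls C f m a b2 x)"

definition invlim where
  "invlim C f m b = {xs :: real \<Rightarrow> ('c \<Rightarrow> int) set.
      (\<forall>a. xs a \<in> HMab C f m a b) \<and>
      (\<forall>a1 a2. a1 \<le> a2 \<longrightarrow> Hp C f m b a2 a1 (xs a1) = xs a2)}"

definition dlim_rel where
  "dlim_rel C f m = {((b1, xs), (b2, ys)).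
      xs \<in> invlim C f m b1 \<and> ys \<in> invlim C f m b2 \<and>
      (\<exists>b3. b1 \<le> b3 \<and> b2 \<le> b3 \<and>
         (\<lambda>a. Hi C f m a b3 b1 (xs a)) = (\<lambda>a. Hi C f m a b3 b2 (ys a)))}"

text \<open>\<open>HM-bar = lim_{b} lim_{a} HM_a^b\<close> (direct limit of inverse limits), and its zero.\<close>

definition HMbar where
  "HMbar C f m = (SIGMA b:UNIV. invlim C f m b) // dlim_rel C f m"

definition HMbar_zero where
  "HMbar_zero C f m = dlim_rel C f m `` {(0, \<lambda>a. hcls C f m a 0 (\<lambda>_. 0))}"

definition nov where
  "nov C f = {g :: 'c \<Rightarrow> int. (\<forall>c. g c \<noteq> 0 \<longrightarrow> c \<in> C) \<and>
      (\<forall>b. finite {c. g c \<noteq> 0 \<and> f c > b})}"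

definition nbd where
  "nbd C m g = (\<lambda>c'. if c' \<in> C then (\<Sum>c\<in>{c. g c \<noteq> 0 \<and> m c' c \<noteq> 0}. m c' c * g c) else 0)"

definition ncycles where
  "ncycles C f m = {g \<in> nov C f. nbd C m g = (\<lambda>_. 0)}"

definition nboundaries where
  "nboundaries C f m = nbd C m ` nov C f"

definition HMnov where
  "HMnov C f m = ncycles C f m //
     {(x, y). x \<in> ncycles C f m \<and> y \<in> ncycles C f m \<and> x - y \<in> nboundaries C f m}"

definition HMnov_zero where
  "HMnov_zero C f m = {y \<in> ncycles C f m. (\<lambda>_. 0) - y \<in> nboundaries C f m}"

text \<open>\<open>Up n\<close> is \<open>overline c_n\<close> (n \<ge> 0), \<open>Lo n\<close> is \<open>underline c_n\<close> (n \<ge> 1).\<close>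

datatype gen = Up nat | Lo nat

definition exC :: "gen set" where
  "exC = range Up \<union> Lo ` {n. n \<ge> 1}"

fun exf :: "gen \<Rightarrow> real" where
  "exf (Up n) = - real n"
| "exf (Lo n) = - real n - 1"

fun exm :: "gen \<Rightarrow> gen \<Rightarrow> int" where
  "exm (Lo n) (Up k) = (if n \<ge> 1 \<and> k = n - 1 then 1 else if n \<ge> 1 \<and> k = n then -2 else 0)"
| "exm _ _ = 0"

end

theory Submission
  imports Defs
begin

lemma exC_Up[simp]: "Up k \<in> exC" by (simp add: exC_def)
lemma exC_Lo[simp]: "Lo n \<in> exC \<longleftrightarrow> n \<ge> 1" by (auto simp add: exC_def)

lemma lev_mem: "c \<in> lev C f a b \<longleftrightarrow> c \<in> C \<and> a \<le> f c \<and> f c \<le> b"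
  by (simp add: lev_def)

lemma fin_lev: "finite (lev exC exf a b)"
proof -
  let ?K = "nat \<lceil>-a\<rceil>"
  have "lev exC exf a b \<subseteq> Up ` {..?K} \<union> Lo ` {..?K}"
  proof
    fix c assume c: "c \<in> lev exC exf a b"
    show "c \<in> Up ` {..?K} \<union> Lo ` {..?K}"
    proof (cases c)
      case (Up k)
      with c have "a \<le> - real k" by (simp add: lev_mem)
      hence "k \<le> ?K" by linarith
      thus ?thesis using Up by auto
    next
      case (Lo k)
      with c have "a \<le> - real k - 1" by (simp add: lev_mem)
      hence "k \<le> ?K" by linarith
      thus ?thesis using Lo by auto
    qed
  qed
  thus ?thesis by (rule finite_subset) auto
qed

lemma bd_out: "c \<notin> lev C f a b \<Longrightarrow> bd C f m a b w c = 0"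
  by (simp add: bd_def)

lemma bd_Up: "bd exC exf exm a b w (Up k) = 0"
  by (simp add: bd_def)

lemma bd_Lo:
  assumes "Lo n \<in> lev exC exf a b"
  shows "bd exC exf exm a b w (Lo n) =
    (if Up (n-1) \<in> lev exC exf a b then w (Up (n-1)) else 0)
    - 2 * (if Up n \<in> lev exC exf a b then w (Up n) else 0)"
proof -
  have n1: "n \<ge> 1" using assms by (simp add: lev_mem)
  have eq: "\<And>c. exm (Lo n) c * w c = (if c = Up (n-1) then w (Up (n-1)) else 0)
        + (if c = Up n then - 2 * w (Up n) else 0)"
  proof -
    fix c show "exm (Lo n) c * w c = (if c = Up (n-1) then w (Up (n-1)) else 0)
        + (if c = Up n then - 2 * w (Up n) else 0)"
      using n1 by (cases c) auto
  qed
  have "bd exC exf exm a b w (Lo n) = (\<Sum>c\<in>lev exC exf a b. exm (Lo n) c * w c)"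
    using assms by (simp add: bd_def)
  also have "\<dots> = (\<Sum>c\<in>lev exC exf a b. (if c = Up (n-1) then w (Up (n-1)) else 0)
        + (if c = Up n then - 2 * w (Up n) else 0))"
    by (simp only: eq)
  also have "\<dots> = (if Up (n-1) \<in> lev exC exf a b then w (Up (n-1)) else 0)
    + (if Up n \<in> lev exC exf a b then - 2 * w (Up n) else 0)"
    by (simp only: sum.distrib sum.delta[OF fin_lev])
  finally show ?thesis by simp
qed

lemma bd_diff: "bd C f m a b (x - y) = bd C f m a b x - bd C f m a b y"
  by (simp add: bd_def fun_eq_iff sum_subtractf right_diff_distrib)

lemma bd_zero: "bd C f m a b (\<lambda>_. 0) = (\<lambda>_. 0)"
  by (simp add: bd_def fun_eq_iff)

lemma CM_diff: "x \<in> CM C f a b \<Longrightarrow> y \<in> CM C f a b \<Longrightarrow> x - y \<in> CM C f a b"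
  unfolding CM_def by (smt (verit) diff_self diff_zero mem_Collect_eq minus_apply)

lemma CM_zero: "(\<lambda>_. 0) \<in> CM C f a b"
  by (simp add: CM_def)

lemma B_zero: "(\<lambda>_. 0) \<in> boundaries C f m a b"
  unfolding boundaries_def using bd_zero[symmetric] CM_zero by (rule image_eqI)

lemma B_diff: "u \<in> boundaries C f m a b \<Longrightarrow> v \<in> boundaries C f m a b \<Longrightarrow> u - v \<in> boundaries C f m a b"
proof -
  assume "u \<in> boundaries C f m a b" "v \<in> boundaries C f m a b"
  then obtain x y where "x \<in> CM C f a b" "y \<in> CM C f a b" "u = bd C f m a b x" "v = bd C f m a b y"
    unfolding boundaries_def by blast
  hence "u - v = bd C f m a b (x - y)" by (simp add: bd_diff)
  moreover have "x - y \<in> CM C f a b" using CM_diff \<open>x \<in> CM C f a b\<close> \<open>y \<in> CM C f a b\<close> by blast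
  ultimately show ?thesis unfolding boundaries_def by blast
qed

lemma boundary_Up: "z \<in> boundaries exC exf exm a b \<Longrightarrow> z (Up k) = 0"
  unfolding boundaries_def using bd_Up by auto

lemma cycle_zero: "(\<lambda>_. 0) \<in> cycles C f m a b"
  by (simp add: cycles_def CM_zero bd_zero)

lemma hcls_bnd:
  assumes "x \<in> boundaries C f m a b"
  shows "hcls C f m a b x = hcls C f m a b (\<lambda>_. 0)"
proof -
  have "x - y \<in> boundaries C f m a b \<longleftrightarrow> (\<lambda>_. 0) - y \<in> boundaries C f m a b" for y
  proof
    assume "x - y \<in> boundaries C f m a b"
    from B_diff[OF this assms] have "(x - y) - x \<in> boundaries C f m a b" .
    moreover have "(x - y) - x = (\<lambda>_. 0) - y" by (simp add: fun_eq_iff)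
    ultimately show "(\<lambda>_. 0) - y \<in> boundaries C f m a b" by simp
  next
    assume a: "(\<lambda>_. 0) - y \<in> boundaries C f m a b"
    have "(\<lambda>_. 0) - x \<in> boundaries C f m a b" using B_diff[OF B_zero assms] .
    from B_diff[OF a this] have "((\<lambda>_. 0) - y) - ((\<lambda>_. 0) - x) \<in> boundaries C f m a b" .
    moreover have "((\<lambda>_. 0) - y) - ((\<lambda>_. 0) - x) = x - y" by (simp add: fun_eq_iff)
    ultimately show "x - y \<in> boundaries C f m a b" by simp
  qed
  thus ?thesis by (simp add: hcls_def)
qed

lemma HMab_elem:
  assumes "X \<in> HMab C f m a b"
  shows "X \<noteq> {} \<and> X \<subseteq> cycles C f m a b"
proof -
  from assms obtain x0 where x0: "x0 \<in> cycles C f m a b"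
    and X: "X = {(x, y). x \<in> cycles C f m a b \<and> y \<in> cycles C f m a b \<and> x - y \<in> boundaries C f m a b} `` {x0}"
    unfolding HMab_def by (auto elim!: quotientE)
  have "x0 - x0 = (\<lambda>_. 0)" by (simp add: fun_eq_iff)
  hence "x0 \<in> X" using X x0 B_zero by auto
  moreover have "X \<subseteq> cycles C f m a b" using X by auto
  ultimately show ?thesis by auto
qed

lemma hcls_in_HMab:
  assumes "x \<in> cycles C f m a b"
  shows "hcls C f m a b x \<in> HMab C f m a b"
proof -
  have "hcls C f m a b x = {(x, y). x \<in> cycles C f m a b \<and> y \<in> cycles C f m a b \<and> x - y \<in> boundaries C f m a b} `` {x}"
    using assms by (auto simp add: hcls_def)
  thus ?thesis unfolding HMab_def using assms by (simp only:) (rule quotientI)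
qed

lemma pow2_dvd_zero:
  fixes z :: int
  assumes "\<forall>j::nat. 2^j dvd z"
  shows "z = 0"
proof (rule ccontr)
  assume nz: "z \<noteq> 0"
  let ?n = "nat \<bar>z\<bar>"
  have "2^?n dvd z" using assms by blast
  hence "\<bar>2^?n\<bar> \<le> \<bar>z\<bar>" using dvd_imp_le_int nz by blast
  moreover have "?n < 2^?n" by (rule less_exp)
  hence "int ?n < int (2^?n)" by linarith
  hence "\<bar>z\<bar> < 2^?n" by simp
  ultimately show False by simp
qed


lemma chain:
  assumes y: "y \<in> cycles exC exf exm a1 b" and kb: "- real k \<le> b"
  shows "a1 \<le> - real k - real j - 1 \<Longrightarrow> y (Up k) = 2^j * y (Up (k+j))"
proof (induction j)
  case 0 thus ?case by simp
next
  case (Suc j)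
  hence IH: "y (Up k) = 2^j * y (Up (k+j))" by simp
  let ?n = "Suc (k+j)"
  have L: "Lo ?n \<in> lev exC exf a1 b" using Suc.prems kb by (simp add: lev_mem)
  have U1: "Up (?n - 1) \<in> lev exC exf a1 b" using Suc.prems kb by (simp add: lev_mem)
  have U2: "Up ?n \<in> lev exC exf a1 b" using Suc.prems kb by (simp add: lev_mem)
  have "bd exC exf exm a1 b y (Lo ?n) = 0" using y by (simp add: cycles_def)
  hence "y (Up (k+j)) = 2 * y (Up ?n)" using bd_Lo[OF L, of y] U1 U2 by simp
  thus ?case using IH by simp
qed

lemma invlim_Up:
  assumes xs: "xs \<in> invlim exC exf exm b" and x: "x \<in> xs a"
  shows "x (Up k) = 0"
proof -
  have Xa: "xs a \<in> HMab exC exf exm a b" using xs by (simp add: invlim_def)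
  hence xc: "x \<in> cycles exC exf exm a b" using HMab_elem x by blast
  show ?thesis
  proof (cases "Up k \<in> lev exC exf a b")
    case False
    thus ?thesis using xc by (auto simp add: cycles_def CM_def)
  next
    case True
    hence ak: "a \<le> - real k" and kb: "- real k \<le> b" by (auto simp add: lev_mem)
    have "2^j dvd x (Up k)" for j
    proof -
      define a1 where "a1 = a - real j - 2"
      have "a1 \<le> a" by (simp add: a1_def)
      hence "Hp exC exf exm b a a1 (xs a1) = xs a" using xs by (simp add: invlim_def)
      with x obtain y where y: "y \<in> xs a1" and xy: "x \<in> hcls exC exf exm a b (proj exf a y)"
        by (auto simp add: Hp_def)
      have yc: "y \<in> cycles exC exf exm a1 b"
        using HMab_elem y xs by (fastforce simp add: invlim_def)
      have "proj exf a y - x \<in> boundaries exC exf exm a b"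
        using xy by (simp add: hcls_def)
      hence "(proj exf a y - x) (Up k) = 0" by (rule boundary_Up)
      hence "x (Up k) = y (Up k)" using ak by (simp add: proj_def)
      also have "\<dots> = 2^j * y (Up (k+j))"
        by (rule chain[OF yc kb]) (use ak a1_def in simp)
      finally show ?thesis by simp
    qed
    thus ?thesis using pow2_dvd_zero by blast
  qed
qed

lemma Bnd:
  assumes x: "x \<in> CM exC exf a b3" and b3: "0 \<le> b3" and xU: "\<And>k. x (Up k) = 0"
  shows "x \<in> boundaries exC exf exm a b3"
proof -
  define K where "K = nat \<lceil>-a\<rceil>"
  define S where "S k = (\<Sum>m\<in>{Suc k..K}. 2^(m - Suc k) * x (Lo m))" for k
  define w where "w c = (case c of Up k \<Rightarrow> if Up k \<in> lev exC exf a b3 then S k else 0 | Lo _ \<Rightarrow> 0)" for c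
  have wCM: "w \<in> CM exC exf a b3"
    unfolding CM_def w_def by (auto split: gen.splits if_splits)
  have "bd exC exf exm a b3 w = x"
  proof
    fix c
    show "bd exC exf exm a b3 w c = x c"
    proof (cases "c \<in> lev exC exf a b3")
      case False
      thus ?thesis using x bd_out[OF False] by (auto simp add: CM_def)
    next
      case True
      show ?thesis
      proof (cases c)
        case (Up k) thus ?thesis using bd_Up xU by simp
      next
        case (Lo n)
        with True have n1: "n \<ge> 1" and an: "a \<le> - real n - 1" and nb: "- real n - 1 \<le> b3"
          by (auto simp add: lev_mem)
        have U1: "Up (n-1) \<in> lev exC exf a b3" using n1 an b3 by (simp add: lev_mem)
        have U2: "Up n \<in> lev exC exf a b3" using n1 an b3 by (simp add: lev_mem)
        have nK: "n \<le> K" unfolding K_def using an by linarith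
        have "bd exC exf exm a b3 w c = S (n-1) - 2 * S n"
          using bd_Lo[of n a b3 w] True Lo U1 U2 by (simp add: w_def)
        also have "S (n-1) = x (Lo n) + (\<Sum>m\<in>{Suc n..K}. 2^(m - n) * x (Lo m))"
          unfolding S_def using n1 nK by (simp add: sum.atLeast_Suc_atMost)
        also have "2 * S n = (\<Sum>m\<in>{Suc n..K}. 2^(m - n) * x (Lo m))"
          unfolding S_def sum_distrib_left
        proof (rule sum.cong)
          fix m assume "m \<in> {Suc n..K}"
          hence "m - n = Suc (m - Suc n)" by auto
          thus "2 * (2 ^ (m - Suc n) * x (Lo m)) = 2 ^ (m - n) * x (Lo m)" by simp
        qed simp
        finally show ?thesis using Lo by simp
      qed
    qed
  qed
  thus ?thesis unfolding boundaries_def using wCM by blast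
qed

lemma CM_mono: "x \<in> CM C f a b \<Longrightarrow> b \<le> b3 \<Longrightarrow> x \<in> CM C f a b3"
  by (auto simp add: CM_def lev_mem)

lemma keyK:
  assumes xs: "xs \<in> invlim exC exf exm b" and bb: "b \<le> b3" and b3: "0 \<le> b3"
  shows "Hi exC exf exm a b3 b (xs a) = hcls exC exf exm a b3 (\<lambda>_. 0)"
proof -
  have Xa: "xs a \<in> HMab exC exf exm a b" using xs by (simp add: invlim_def)
  have "hcls exC exf exm a b3 x = hcls exC exf exm a b3 (\<lambda>_. 0)" if x: "x \<in> xs a" for x
  proof -
    have "x \<in> cycles exC exf exm a b" using HMab_elem Xa x by blast
    hence "x \<in> CM exC exf a b3" using CM_mono bb by (auto simp add: cycles_def)
    hence "x \<in> boundaries exC exf exm a b3" using Bnd b3 invlim_Up[OF xs x] by blast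
    thus ?thesis by (rule hcls_bnd)
  qed
  moreover have "xs a \<noteq> {}" using HMab_elem Xa by blast
  ultimately show ?thesis unfolding Hi_def by simp
qed


lemma z0_invlim: "(\<lambda>a. hcls exC exf exm a 0 (\<lambda>_. 0)) \<in> invlim exC exf exm 0"
proof -
  have "Hp exC exf exm 0 a2 a1 (hcls exC exf exm a1 0 (\<lambda>_. 0)) = hcls exC exf exm a2 0 (\<lambda>_. 0)"
    if "a1 \<le> a2" for a1 a2
  proof -
    have "hcls exC exf exm a2 0 (proj exf a2 y) = hcls exC exf exm a2 0 (\<lambda>_. 0)"
      if y: "y \<in> hcls exC exf exm a1 0 (\<lambda>_. 0)" for y
    proof -
      have yc: "y \<in> cycles exC exf exm a1 0" and yb: "(\<lambda>_. 0) - y \<in> boundaries exC exf exm a1 0"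
        using y by (auto simp add: hcls_def)
      have yU: "y (Up k) = 0" for k using boundary_Up[OF yb, of k] by simp
      have "proj exf a2 y \<in> CM exC exf a2 0"
        using yc by (auto simp add: cycles_def CM_def proj_def lev_mem)
      hence "proj exf a2 y \<in> boundaries exC exf exm a2 0"
        by (rule Bnd) (auto simp add: proj_def yU)
      thus ?thesis by (rule hcls_bnd)
    qed
    moreover have "(\<lambda>_. 0) \<in> hcls exC exf exm a1 0 (\<lambda>_. 0)"
    proof -
      have "(\<lambda>_. 0) - (\<lambda>_. 0) = (\<lambda>_::gen. 0::int)" by (simp add: fun_eq_iff)
      thus ?thesis using cycle_zero[of exC exf exm a1 0] B_zero[of exC exf exm a1 0]
        unfolding hcls_def by simp
    qed
    ultimately show ?thesis unfolding Hp_def by auto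
  qed
  thus ?thesis unfolding invlim_def using hcls_in_HMab[OF cycle_zero] by auto
qed

lemma HMbar_eq: "HMbar exC exf exm = {HMbar_zero exC exf exm}"
proof -
  let ?A = "SIGMA b:UNIV. invlim exC exf exm b"
  let ?r = "dlim_rel exC exf exm"
  have img: "?r `` {p} = ?A" if p: "p \<in> ?A" for p
  proof -
    obtain b1 xs where pe: "p = (b1, xs)" and xs: "xs \<in> invlim exC exf exm b1"
      using p by auto
    show ?thesis
    proof
      show "?r `` {p} \<subseteq> ?A" unfolding pe dlim_rel_def by auto
    next
      show "?A \<subseteq> ?r `` {p}"
      proof
        fix q assume q: "q \<in> ?A"
        then obtain b2 ys where qe: "q = (b2, ys)" and ys: "ys \<in> invlim exC exf exm b2" by auto
        define b3 where "b3 = max (max b1 b2) 0"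
        have "(\<lambda>a. Hi exC exf exm a b3 b1 (xs a)) = (\<lambda>a. Hi exC exf exm a b3 b2 (ys a))"
          using keyK[OF xs, of b3] keyK[OF ys, of b3] by (simp add: b3_def)
        hence "(p, q) \<in> ?r" unfolding pe qe dlim_rel_def using xs ys
          by (auto simp add: b3_def intro!: exI[of _ b3])
        thus "q \<in> ?r `` {p}" by simp
      qed
    qed
  qed
  have z0: "(0, \<lambda>a. hcls exC exf exm a 0 (\<lambda>_. 0)) \<in> ?A" using z0_invlim by simp
  have ne: "?A \<noteq> {}" using z0 by blast
  have "?A // ?r = (\<Union>x\<in>?A. {?A})"
    unfolding quotient_def using img by (intro SUP_cong) auto
  also have "\<dots> = {?A}" using ne by (simp only: UN_constant) simp
  finally have "?A // ?r = {?A}" .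
  moreover have "HMbar_zero exC exf exm = ?A"
    unfolding HMbar_zero_def using img[OF z0] .
  ultimately show ?thesis unfolding HMbar_def by simp
qed


lemma floer: "floer_triple exC exf exm"
proof -
  have "finite {c\<in>exC. a \<le> exf c \<and> exf c \<le> b}" for a b
    using fin_lev[of a b] by (simp add: lev_def)
  moreover have "exm c1 c2 \<noteq> 0 \<longrightarrow> exf c1 < exf c2" for c1 c2
    by (cases c1; cases c2) (auto split: if_splits)
  moreover have emp: "\<And>c1 c3. {c\<in>exC. exm c1 c \<noteq> 0 \<and> exm c c3 \<noteq> 0} = {}"
  proof -
    fix c1 c3
    have "exm c1 c = 0 \<or> exm c c3 = 0" for c by (cases c) auto
    thus "{c\<in>exC. exm c1 c \<noteq> 0 \<and> exm c c3 \<noteq> 0} = {}" by auto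
  qed
  ultimately show ?thesis unfolding floer_triple_def emp by auto
qed

definition x0 :: "gen \<Rightarrow> int" where
  "x0 c = (case c of Lo n \<Rightarrow> if odd n then 1 else 0 | Up _ \<Rightarrow> 0)"

lemma x0_nov: "x0 \<in> nov exC exf"
proof -
  have "{c. x0 c \<noteq> 0 \<and> exf c > b} \<subseteq> Lo ` {..nat \<lceil>-b\<rceil>}" for b
  proof
    fix c assume c: "c \<in> {c. x0 c \<noteq> 0 \<and> exf c > b}"
    then obtain n where n: "c = Lo n" by (cases c) (auto simp add: x0_def)
    with c have "- real n - 1 > b" by simp
    hence "n \<le> nat \<lceil>-b\<rceil>" by linarith
    thus "c \<in> Lo ` {..nat \<lceil>-b\<rceil>}" using n by auto
  qed
  hence "finite {c. x0 c \<noteq> 0 \<and> exf c > b}" for b by (rule finite_subset) auto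
  moreover have "x0 c \<noteq> 0 \<longrightarrow> c \<in> exC" for c
    by (cases c) (auto simp add: x0_def elim: oddE)
  ultimately show ?thesis by (simp add: nov_def)
qed

lemma nbd_zero_support: "(\<And>n. g (Up n) = 0) \<Longrightarrow> nbd exC exm g = (\<lambda>_. 0)"
proof -
  assume gU: "\<And>n. g (Up n) = 0"
  have emp: "\<And>c'. {c. g c \<noteq> 0 \<and> exm c' c \<noteq> 0} = {}"
  proof -
    fix c'
    have "g c = 0 \<or> exm c' c = 0" for c using gU by (cases c) auto
    thus "{c. g c \<noteq> 0 \<and> exm c' c \<noteq> 0} = {}" by auto
  qed
  show ?thesis
  proof (rule ext)
    fix c' show "nbd exC exm g c' = 0" unfolding nbd_def emp by simp
  qed
qed

lemma x0_cyc: "x0 \<in> ncycles exC exf exm"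
  using x0_nov nbd_zero_support[of x0] by (simp add: ncycles_def x0_def)

lemma zero_nov: "(\<lambda>_. 0) \<in> nov exC exf" by (simp add: nov_def)

lemma zero_cyc: "(\<lambda>_. 0) \<in> ncycles exC exf exm"
  using zero_nov nbd_zero_support[of "\<lambda>_. 0"] by (simp add: ncycles_def)

lemma nbd_Lo:
  assumes n1: "n \<ge> 1"
  shows "nbd exC exm g (Lo n) = g (Up (n-1)) - 2 * g (Up n)"
proof -
  let ?h = "\<lambda>c. exm (Lo n) c * g c"
  let ?S = "{c. g c \<noteq> 0 \<and> exm (Lo n) c \<noteq> 0}"
  have sub: "?S \<subseteq> {Up (n-1), Up n}"
  proof
    fix c assume "c \<in> ?S"
    thus "c \<in> {Up (n-1), Up n}" by (cases c) (auto split: if_splits)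
  qed
  have "sum ?h ?S = sum ?h {Up (n-1), Up n}"
    by (rule sum.mono_neutral_left) (use sub in auto)
  also have "\<dots> = g (Up (n-1)) - 2 * g (Up n)"
  proof -
    have ne: "Up (n-1) \<noteq> Up n" using n1 by simp
    thus ?thesis using n1 by (simp add: sum.insert)
  qed
  finally show ?thesis using n1 by (simp add: nbd_def)
qed

lemma x0_not_bnd: "(\<lambda>_. 0) - x0 \<notin> nboundaries exC exf exm"
proof
  assume "(\<lambda>_. 0) - x0 \<in> nboundaries exC exf exm"
  then obtain g where g: "nbd exC exm g = (\<lambda>_. 0) - x0" by (auto simp add: nboundaries_def)
  define u where "u n = g (Up n)" for n
  have rec: "u n = 2 * u (Suc n) - (if odd (Suc n) then 1 else 0)" for n
  proof -
    have "nbd exC exm g (Lo (Suc n)) = - x0 (Lo (Suc n))" using g by simp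
    thus ?thesis using nbd_Lo[of "Suc n" g] by (simp add: u_def x0_def)
  qed
  define d where "d n = 3 * u n - (if even n then 1 else 2)" for n
  have dstep: "d n = 2 * d (Suc n)" for n
    using rec[of n] by (auto simp add: d_def)
  have "d 0 = 2^j * d j" for j
  proof (induction j)
    case 0 thus ?case by simp
  next
    case (Suc j) thus ?case using dstep[of j] by simp
  qed
  hence "\<forall>j. 2^j dvd d 0" unfolding dvd_def by blast
  hence "d 0 = 0" by (rule pow2_dvd_zero)
  thus False by (simp add: d_def) presburger
qed

lemma HMnov_facts: "HMnov exC exf exm \<noteq> {HMnov_zero exC exf exm} \<and>
    HMnov_zero exC exf exm \<in> HMnov exC exf exm"
proof -
  let ?R = "{(x, y). x \<in> ncycles exC exf exm \<and> y \<in> ncycles exC exf exm \<and> x - y \<in> nboundaries exC exf exm}"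
  have zb: "(\<lambda>_. 0) \<in> nboundaries exC exf exm"
    using zero_nov nbd_zero_support[of "\<lambda>_. 0"] unfolding nboundaries_def
    by (metis image_eqI)
  have c1: "?R `` {x0} \<in> HMnov exC exf exm"
    unfolding HMnov_def using x0_cyc by (rule quotientI)
  have "x0 - x0 = (\<lambda>_. 0)" by (simp add: fun_eq_iff)
  hence "x0 \<in> ?R `` {x0}" using x0_cyc zb by simp
  moreover have "x0 \<notin> HMnov_zero exC exf exm" using x0_not_bnd by (simp add: HMnov_zero_def)
  ultimately have ne: "?R `` {x0} \<noteq> HMnov_zero exC exf exm" by blast
  have "?R `` {\<lambda>_. 0} = HMnov_zero exC exf exm"
    using zero_cyc by (auto simp add: HMnov_zero_def fun_diff_def)
  moreover have "?R `` {\<lambda>_. 0} \<in> HMnov exC exf exm"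
    unfolding HMnov_def using zero_cyc by (rule quotientI)
  ultimately show ?thesis using c1 ne by auto
qed

theorem mainTheorem9:
  shows "floer_triple exC exf exm \<and>
         HMbar exC exf exm = {HMbar_zero exC exf exm} \<and>
         HMnov exC exf exm \<noteq> {HMnov_zero exC exf exm} \<and>
         \<not> (\<exists>h. bij_betw h (HMbar exC exf exm) (HMnov exC exf exm))"
proof -
  have nb: "\<not> (\<exists>h. bij_betw h (HMbar exC exf exm) (HMnov exC exf exm))"
  proof
    assume "\<exists>h. bij_betw h (HMbar exC exf exm) (HMnov exC exf exm)"
    then obtain h where "bij_betw h (HMbar exC exf exm) (HMnov exC exf exm)" by blast
    hence "HMnov exC exf exm = {h (HMbar_zero exC exf exm)}"
      using HMbar_eq by (simp add: bij_betw_def)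
    thus False using HMnov_facts by auto
  qed
  show ?thesis using floer HMbar_eq HMnov_facts nb by blast
qed

end
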